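(* $\mathrm{Bil}^{\rm FH}_D$ is an open subset of $\mathrm{Bil}_D$ with respect to the $C^{3+\alpha}$ topology.
   Context: Fix $D\ge1$ and $\alpha\in(0,1)$. $\mathrm{Bil}_D$ is the set of families $(f_i)_{1\le i\le D}$ of $C^{3+\alpha}$ maps $\mathbb S^1\to\mathbb T^2$, up to permutation of indices, such that for all $i$: each connected component of the lift of $f_i(\mathbb S^1)$ to $\mathbb R^2$ is the boundary of a convex set; $|f_i'|>0$ is constant, $|f_i''|\ne0$, $f_i$ turns counterclockwise and $f_i(\mathbb S^1)$ does not self-intersect; and $f_i(\mathbb S^1)\cap f_j(\mathbb S^1)=\emptyset$ for $i\ne j$. Such a family is identified with the Sinai billiard table $Q=\mathbb T^2\setminus\bigsqcup_iB_i$ where $\partial B_i$ is parametrized by $f_i$. $\mathrm{Bil}^{\rm FH}_D$ is the subset of tables with finite horizon, i.e. no billiard flow trajectory makes only grazing (tangential) collisions. $\mathrm{Bil}_D$ carries the $C^{3+\alpha}$ topology. *)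

theory Defs
  imports "HOL-Analysis.Analysis"
begin

text \<open>The circle is S1 = R/Z and the torus is T2 = R^2/Z^2.
  A continuous map f : S1 -> T2 is represented by a lift F : R -> R^2 with
  F(t+1) - F(t) in Z^2.  A family (f_i), 1 <= i <= D, is a function on indices.\<close>

definition Zsq :: "(real \<times> real) set" where
  "Zsq = {(real_of_int a, real_of_int b) | a b. True}"

fun vd :: "nat \<Rightarrow> (real \<Rightarrow> real \<times> real) \<Rightarrow> real \<Rightarrow> real \<times> real" where
  "vd 0 F = F"
| "vd (Suc n) F = (\<lambda>t. vector_derivative (vd n F) (at t))"

definition cross2 :: "real \<times> real \<Rightarrow> real \<times> real \<Rightarrow> real" where
  "cross2 u v = fst u * snd v - snd u * fst v"

definition circle_map_lift :: "(real \<Rightarrow> real \<times> real) \<Rightarrow> bool" where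
  "circle_map_lift F \<longleftrightarrow> continuous_on UNIV F \<and> (\<forall>t. F (t + 1) - F t \<in> Zsq)"

definition C3a :: "real \<Rightarrow> (real \<Rightarrow> real \<times> real) \<Rightarrow> bool" where
  "C3a \<alpha> F \<longleftrightarrow>
     (\<forall>j<3. \<forall>t. (vd j F has_vector_derivative vd (Suc j) F t) (at t)) \<and>
     (\<exists>C. \<forall>s t. norm (vd 3 F s - vd 3 F t) \<le> C * \<bar>s - t\<bar> powr \<alpha>)"

text \<open>The lift to R^2 of the image curve f(S1) in T2.\<close>
definition lift_set :: "(real \<Rightarrow> real \<times> real) \<Rightarrow> (real \<times> real) set" where
  "lift_set F = {F t + k | t k. k \<in> Zsq}"

text \<open>Interior of the lifted scatterer bounded by f: union of the interiors of the
  convex sets whose boundaries are the connected components of the lift.\<close>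
definition scatterer_interior :: "(real \<Rightarrow> real \<times> real) \<Rightarrow> (real \<times> real) set" where
  "scatterer_interior F = (\<Union>c\<in>components (lift_set F). interior (convex hull c))"

definition Bil :: "nat \<Rightarrow> real \<Rightarrow> (nat \<Rightarrow> real \<Rightarrow> real \<times> real) set" where
  "Bil D \<alpha> = {f.
     (\<forall>i\<in>{1..D}.
        circle_map_lift (f i) \<and> C3a \<alpha> (f i) \<and>
        (\<forall>c\<in>components (lift_set (f i)). \<exists>C. convex C \<and> c = frontier C) \<and>
        (\<exists>v>0. \<forall>t. norm (vd 1 (f i) t) = v) \<and>
        (\<forall>t. vd 2 (f i) t \<noteq> 0) \<and>
        (\<forall>t. cross2 (vd 1 (f i) t) (vd 2 (f i) t) > 0) \<and>
        (\<forall>s t. f i s - f i t \<in> Zsq \<longrightarrow> s - t \<in> \<int>)) \<and>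
     (\<forall>i\<in>{1..D}. \<forall>j\<in>{1..D}. i \<noteq> j \<longrightarrow> lift_set (f i) \<inter> lift_set (f j) = {})}"

text \<open>A billiard trajectory making only grazing collisions (or none) is a full
  straight line x + t v (v nonzero) that never enters the interior of a scatterer.\<close>
definition has_grazing_only_trajectory :: "nat \<Rightarrow> (nat \<Rightarrow> real \<Rightarrow> real \<times> real) \<Rightarrow> bool" where
  "has_grazing_only_trajectory D f \<longleftrightarrow>
     (\<exists>x v. v \<noteq> 0 \<and> (\<forall>t::real. \<forall>i\<in>{1..D}. x + t *\<^sub>R v \<notin> scatterer_interior (f i)))"

definition BilFH :: "nat \<Rightarrow> real \<Rightarrow> (nat \<Rightarrow> real \<Rightarrow> real \<times> real) set" where
  "BilFH D \<alpha> = {f \<in> Bil D \<alpha>. \<not> has_grazing_only_trajectory D f}"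

definition C3a_close :: "real \<Rightarrow> real \<Rightarrow> (real \<Rightarrow> real \<times> real) \<Rightarrow> (real \<Rightarrow> real \<times> real) \<Rightarrow> bool" where
  "C3a_close \<alpha> \<epsilon> F G \<longleftrightarrow> (\<exists>k\<in>Zsq.
     let H = (\<lambda>t. F t - G t - k) in
       (\<forall>j\<le>3. \<forall>t. norm (vd j H t) \<le> \<epsilon>) \<and>
       (\<forall>s t. norm (vd 3 H s - vd 3 H t) \<le> \<epsilon> * \<bar>s - t\<bar> powr \<alpha>))"

end

theory Submission
  imports Defs "HOL-Analysis.Analysis"
begin

lemma Zsq_iff: "k \<in> Zsq \<longleftrightarrow> fst k \<in> \<int> \<and> snd k \<in> \<int>"
  unfolding Zsq_def by (cases k) (auto elim!: Ints_cases)

lemma Zsq_add: "a \<in> Zsq \<Longrightarrow> b \<in> Zsq \<Longrightarrow> a + b \<in> Zsq"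
  by (simp add: Zsq_iff)
lemma Zsq_diff: "a \<in> Zsq \<Longrightarrow> b \<in> Zsq \<Longrightarrow> a - b \<in> Zsq"
  by (simp add: Zsq_iff)
lemma Zsq_uminus: "a \<in> Zsq \<Longrightarrow> - a \<in> Zsq"
  by (simp add: Zsq_iff)
lemma Zsq_zero: "0 \<in> Zsq"
  by (simp add: Zsq_iff)
lemma Zsq_scale: "a \<in> Zsq \<Longrightarrow> of_int n *\<^sub>R a \<in> Zsq"
  by (simp add: Zsq_iff)

lemma Ints_sep: "(x::real) \<in> \<int> \<Longrightarrow> y \<in> \<int> \<Longrightarrow> x \<noteq> y \<Longrightarrow> 1 \<le> \<bar>x - y\<bar>"
  by (metis Ints_diff Ints_nonzero_abs_ge1 eq_iff_diff_eq_0)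

lemma Zsq_sep: "a \<in> Zsq \<Longrightarrow> b \<in> Zsq \<Longrightarrow> a \<noteq> b \<Longrightarrow> 1 \<le> norm (a - b)"
proof -
  assume a: "a \<in> Zsq" and b: "b \<in> Zsq" and ne: "a \<noteq> b"
  have "fst a \<noteq> fst b \<or> snd a \<noteq> snd b" using ne by (simp add: prod_eq_iff)
  moreover have "\<bar>fst (a - b)\<bar> \<le> norm (a - b)" "\<bar>snd (a - b)\<bar> \<le> norm (a - b)"
    using norm_fst_le[of "fst (a-b)" "snd (a-b)"] norm_snd_le[of "snd (a-b)" "fst (a-b)"]
    by (metis prod.collapse real_norm_def)+
  ultimately show ?thesis using a b Ints_sep[of "fst a" "fst b"] Ints_sep[of "snd a" "snd b"]
    by (auto simp: Zsq_iff)
qed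

lemma closed_Zsq_subset: "L \<subseteq> Zsq \<Longrightarrow> closed L"
proof (rule discrete_imp_closed[of 1])
  assume L: "L \<subseteq> Zsq"
  show "\<forall>x\<in>L. \<forall>y\<in>L. dist y x < 1 \<longrightarrow> y = x"
  proof (intro ballI impI)
    fix x y assume "x \<in> L" "y \<in> L" "dist y x < 1"
    then show "y = x" using Zsq_sep[of y x] L by (force simp: dist_norm)
  qed
qed simp

lemma int_valued_const:
  fixes g :: "real \<Rightarrow> real"
  assumes "continuous_on UNIV g" "\<And>t. g t \<in> \<int>"
  shows "g t = g 0"
proof -
  have "g constant_on UNIV"
  proof (rule continuous_discrete_range_constant[OF connected_UNIV assms(1)])
    fix x :: real
    show "\<exists>e>0. \<forall>y. y \<in> UNIV \<and> g y \<noteq> g x \<longrightarrow> e \<le> norm (g y - g x)"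
      using Ints_sep[OF assms(2) assms(2)] by (intro exI[of _ 1]) auto
  qed
  then show ?thesis by (auto simp: constant_on_def)
qed

lemma lift_period:
  assumes "circle_map_lift F"
  shows "F (t + 1) - F t = F 1 - F 0"
proof -
  have c: "continuous_on UNIV F" and z: "\<And>t. F (t+1) - F t \<in> Zsq"
    using assms by (auto simp: circle_map_lift_def)
  have c1: "continuous_on UNIV (\<lambda>t. F (t + 1) - F t)"
    by (intro continuous_intros continuous_on_compose2[OF c]) auto
  have "fst (F (t + 1) - F t) = fst (F (0 + 1) - F 0)"
    by (rule int_valued_const[of "\<lambda>t. fst (F (t + 1) - F t)", OF continuous_on_fst[OF c1]])
       (use z in \<open>auto simp: Zsq_iff\<close>)
  moreover have "snd (F (t + 1) - F t) = snd (F (0 + 1) - F 0)"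
    by (rule int_valued_const[of "\<lambda>t. snd (F (t + 1) - F t)", OF continuous_on_snd[OF c1]])
       (use z in \<open>auto simp: Zsq_iff\<close>)
  ultimately show ?thesis by (simp add: prod_eq_iff)
qed

lemma lift_shift_nat:
  assumes "circle_map_lift F"
  shows "F (t + real n) = F t + real n *\<^sub>R (F 1 - F 0)"
proof (induction n)
  case 0 then show ?case by simp
next
  case (Suc n)
  have "F (t + real (Suc n)) = F ((t + real n) + 1)" by (simp add: algebra_simps)
  also have "\<dots> = F (t + real n) + (F 1 - F 0)" using lift_period[OF assms, of "t + real n"]
    by (simp add: algebra_simps)
  finally show ?case using Suc by (simp add: algebra_simps)
qed

lemma lift_shift:
  assumes "circle_map_lift F"
  shows "F (t + of_int n) = F t + of_int n *\<^sub>R (F 1 - F 0)"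
proof (cases "n \<ge> 0")
  case True
  then obtain k where "n = int k" using nonneg_int_cases by blast
  then show ?thesis using lift_shift_nat[OF assms, of t k] by simp
next
  case False
  define k where "k = nat (-n)"
  have k: "n = - int k" using False by (simp add: k_def)
  have "F ((t - real k) + real k) = F (t - real k) + real k *\<^sub>R (F 1 - F 0)"
    by (rule lift_shift_nat[OF assms])
  then show ?thesis using k by (simp add: algebra_simps)
qed

lemma lift_shift_Ints:
  assumes "circle_map_lift F" "j \<in> \<int>"
  shows "F (t + j) = F t + j *\<^sub>R (F 1 - F 0)"
  using assms(2) lift_shift[OF assms(1)] by (auto elim!: Ints_cases)

lemma lift_m_Zsq: assumes "circle_map_lift F" shows "F 1 - F 0 \<in> Zsq"
proof -
  have "\<forall>t. F (t+1) - F t \<in> Zsq" using assms by (simp add: circle_map_lift_def)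
  from spec[OF this, of 0] show ?thesis by simp
qed

lemma lift_decomp:
  assumes "circle_map_lift F"
  shows "F t = F (t - of_int \<lfloor>t\<rfloor>) + of_int \<lfloor>t\<rfloor> *\<^sub>R (F 1 - F 0)"
  using lift_shift[OF assms, of "t - of_int \<lfloor>t\<rfloor>" "\<lfloor>t\<rfloor>"] by simp

lemma component_in_translate:
  assumes cml: "circle_map_lift F" and inj: "\<forall>s t. F s - F t \<in> Zsq \<longrightarrow> s - t \<in> \<int>"
    and c: "c \<in> components (lift_set F)"
  shows "\<exists>k0\<in>Zsq. c \<subseteq> {F t + k0 | t. True}"
proof -
  define m where "m = F 1 - F 0"
  have mZ: "m \<in> Zsq" using lift_m_Zsq[OF cml] by (simp add: m_def)
  have sh: "\<And>t n. F (t + of_int n) = F t + of_int n *\<^sub>R m" using lift_shift[OF cml] by (simp add: m_def)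
  have dec: "\<And>t. F t = F (t - of_int \<lfloor>t\<rfloor>) + of_int \<lfloor>t\<rfloor> *\<^sub>R m"
    unfolding m_def by (rule lift_decomp[OF cml])
  have fr: "t - of_int \<lfloor>t\<rfloor> \<in> {0..1::real}" for t
    using floor_correct[of t] by (auto simp del: of_int_floor_le) linarith
  have cne: "c \<noteq> {}" and csub: "c \<subseteq> lift_set F" and ccon: "connected c"
    using c by (rule in_components_nonempty, rule in_components_subset, rule in_components_connected)
  then obtain z where zc: "z \<in> c" by blast
  then obtain s0 k0 where z: "z = F s0 + k0" and k0: "k0 \<in> Zsq"
    using csub unfolding lift_set_def by blast
  define K where "K = F ` {0..1}"
  have contF: "continuous_on UNIV F" using cml by (simp add: circle_map_lift_def)
  have cK: "compact K" unfolding K_def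
    by (rule compact_continuous_image[OF continuous_on_subset[OF contF]]) auto
  define L0 where "L0 = {k0 + of_int n *\<^sub>R m | n. True}"
  define LR where "LR = Zsq - L0"
  have L0Z: "L0 \<subseteq> Zsq" unfolding L0_def using k0 mZ by (auto intro!: Zsq_add Zsq_scale)
  define A where "A = (\<Union>x\<in>L0. \<Union>y\<in>K. {x + y})"
  define B where "B = (\<Union>x\<in>LR. \<Union>y\<in>K. {x + y})"
  have clA: "closed A" unfolding A_def
    by (rule closed_compact_sums[OF closed_Zsq_subset[OF L0Z] cK])
  have clB: "closed B" unfolding B_def
    by (rule closed_compact_sums[OF closed_Zsq_subset cK]) (auto simp: LR_def)
  have cover: "lift_set F \<subseteq> A \<union> B"
  proof
    fix w assume "w \<in> lift_set F"
    then obtain t k where w: "w = F t + k" and k: "k \<in> Zsq" unfolding lift_set_def by blast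
    define k' where "k' = k + of_int \<lfloor>t\<rfloor> *\<^sub>R m"
    have k'Z: "k' \<in> Zsq" unfolding k'_def by (intro Zsq_add Zsq_scale k mZ)
    have w2: "w = k' + F (t - of_int \<lfloor>t\<rfloor>)" unfolding w k'_def
      by (subst dec[of t]) (simp add: algebra_simps)
    have yK: "F (t - of_int \<lfloor>t\<rfloor>) \<in> K" unfolding K_def using fr by blast
    show "w \<in> A \<union> B"
    proof (cases "k' \<in> L0")
      case True then show ?thesis using w2 yK unfolding A_def by blast
    next
      case False then show ?thesis using w2 yK k'Z unfolding B_def LR_def by blast
    qed
  qed
  have disj: "A \<inter> B = {}"
  proof (rule ccontr)
    assume "A \<inter> B \<noteq> {}"
    then obtain n s x' s' where s: "s \<in> {0..1}" and s': "s' \<in> {0..1}" and x': "x' \<in> LR"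
      and eq: "k0 + of_int n *\<^sub>R m + F s = x' + F s'"
      unfolding A_def B_def L0_def K_def by blast
    have x'Z: "x' \<in> Zsq" and x'n: "x' \<notin> L0" using x' by (auto simp: LR_def)
    have "F s - F s' = x' - (k0 + of_int n *\<^sub>R m)" using eq by (simp add: algebra_simps)
    also have "\<dots> \<in> Zsq" by (intro Zsq_diff Zsq_add Zsq_scale x'Z k0 mZ)
    finally have "s - s' \<in> \<int>" using inj by blast
    then obtain j where j: "s - s' = of_int j" by (auto elim!: Ints_cases)
    have "s = s' + of_int j" using j by simp
    then have "F s = F s' + of_int j *\<^sub>R m" using sh[of s' j] by simp
    then have "x' = k0 + of_int (n + j) *\<^sub>R m" using eq by (simp add: algebra_simps)
    then have "x' \<in> L0" unfolding L0_def by blast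
    then show False using x'n by blast
  qed
  have zA: "z \<in> A"
  proof -
    have "z = (k0 + of_int \<lfloor>s0\<rfloor> *\<^sub>R m) + F (s0 - of_int \<lfloor>s0\<rfloor>)"
      unfolding z by (subst dec[of s0]) (simp add: algebra_simps)
    moreover have "k0 + of_int \<lfloor>s0\<rfloor> *\<^sub>R m \<in> L0" unfolding L0_def by blast
    moreover have "F (s0 - of_int \<lfloor>s0\<rfloor>) \<in> K" unfolding K_def using fr by blast
    ultimately show ?thesis unfolding A_def by blast
  qed
  have "A \<inter> c = {} \<or> B \<inter> c = {}"
    by (rule connected_closedD[OF ccon _ _ clA clB]) (use disj cover csub in auto)
  then have cA: "c \<subseteq> A" using zc zA cover csub by blast
  have "A \<subseteq> {F t + k0 | t. True}"
  proof
    fix w assume "w \<in> A"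
    then obtain n s where "w = k0 + of_int n *\<^sub>R m + F s" unfolding A_def L0_def K_def by blast
    then have "w = F (s + of_int n) + k0" using sh[of s n] by (simp add: algebra_simps)
    then show "w \<in> {F t + k0 | t. True}" by blast
  qed
  then show ?thesis using cA k0 by blast
qed

lemma inner_vderiv:
  assumes "(f has_vector_derivative f') (at t)"
  shows "((\<lambda>t. a \<bullet> f t) has_vector_derivative (a \<bullet> f')) (at t)"
proof -
  have "((\<lambda>t. a \<bullet> f t) has_derivative (\<lambda>h. a \<bullet> (h *\<^sub>R f'))) (at t)"
    using has_derivative_inner_right[OF assms[unfolded has_vector_derivative_def]] .
  then show ?thesis unfolding has_vector_derivative_def by (simp add: mult.commute)
qed

lemma cross2_zero:
  fixes a u w :: "real \<times> real"
  assumes "a \<noteq> 0" "a \<bullet> u = 0" "a \<bullet> w = 0"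
  shows "cross2 u w = 0"
proof -
  obtain a1 a2 u1 u2 w1 w2 where e: "a = (a1,a2)" "u = (u1,u2)" "w = (w1,w2)" by (metis prod.collapse)
  have h1: "a1*u1 + a2*u2 = 0" "a1*w1 + a2*w2 = 0" using assms(2,3) e by simp_all
  have g1: "a1*u1 = -(a2*u2)" "a1*w1 = -(a2*w2)" "a2*u2 = -(a1*u1)" "a2*w2 = -(a1*w1)" using h1 by linarith+
  have "a1 * (u1*w2 - u2*w1) = 0"
  proof -
    have "a1 * (u1*w2 - u2*w1) = (a1*u1)*w2 - (a1*w1)*u2" by (simp add: algebra_simps)
    also have "\<dots> = (-(a2*u2))*w2 - (-(a2*w2))*u2" by (simp only: g1(1,2))
    also have "\<dots> = 0" by (simp add: algebra_simps)
    finally show ?thesis .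
  qed
  moreover have "a2 * (u1*w2 - u2*w1) = 0"
  proof -
    have "a2 * (u1*w2 - u2*w1) = (a2*w2)*u1 - (a2*u2)*w1" by (simp add: algebra_simps)
    also have "\<dots> = (-(a1*w1))*u1 - (-(a1*u1))*w1" by (simp only: g1(3,4))
    also have "\<dots> = 0" by (simp add: algebra_simps)
    finally show ?thesis .
  qed
  moreover have "a1 \<noteq> 0 \<or> a2 \<noteq> 0" using assms(1) e by (auto simp: zero_prod_def)
  ultimately show ?thesis using e by (auto simp: cross2_def)
qed

lemma curve_not_in_line:
  assumes C: "C3a \<alpha> G" and cr: "\<forall>t. cross2 (vd 1 G t) (vd 2 G t) > 0"
    and a: "a \<noteq> 0" and l: "\<forall>t. a \<bullet> (G t + w) = b"
  shows False
proof -
  have dd: "\<forall>j<3. \<forall>t. (vd j G has_vector_derivative vd (Suc j) G t) (at t)"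
    using C by (simp add: C3a_def)
  have d0: "(G has_vector_derivative vd 1 G t) (at t)" for t
  proof -
    have "(0::nat) < 3" by simp
    then have "(vd 0 G has_vector_derivative vd (Suc 0) G t) (at t)" using dd by blast
    then show ?thesis by (simp only: vd.simps(1) One_nat_def)
  qed
  have d1: "(vd 1 G has_vector_derivative vd 2 G t) (at t)" for t
  proof -
    have "(1::nat) < 3" by simp
    then have "(vd 1 G has_vector_derivative vd (Suc 1) G t) (at t)" using dd by blast
    then show ?thesis by (simp only: Suc_1)
  qed
  have z1: "a \<bullet> vd 1 G t = 0" for t
  proof -
    have "((\<lambda>t. a \<bullet> G t) has_vector_derivative (a \<bullet> vd 1 G t)) (at t)" by (rule inner_vderiv[OF d0])
    moreover have "(\<lambda>t. a \<bullet> G t) = (\<lambda>t. b - a \<bullet> w)" using l by (auto simp: inner_add_right algebra_simps)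
    ultimately have "((\<lambda>t. b - a \<bullet> w) has_vector_derivative (a \<bullet> vd 1 G t)) (at t)" by simp
    then show ?thesis using vector_derivative_unique_at has_vector_derivative_const by blast
  qed
  have z2: "a \<bullet> vd 2 G t = 0" for t
  proof -
    have "((\<lambda>t. a \<bullet> vd 1 G t) has_vector_derivative (a \<bullet> vd 2 G t)) (at t)" by (rule inner_vderiv[OF d1])
    then have "((\<lambda>t. 0) has_vector_derivative (a \<bullet> vd 2 G t)) (at t)" using z1 by simp
    then show ?thesis using vector_derivative_unique_at has_vector_derivative_const by blast
  qed
  have "cross2 (vd 1 G 0) (vd 2 G 0) = 0" by (rule cross2_zero[OF a z1 z2])
  then show False using spec[OF cr, of 0] by linarith
qed

lemma hull_interior_nonempty:
  assumes C: "C3a \<alpha> G" and cr: "\<forall>t. cross2 (vd 1 G t) (vd 2 G t) > 0"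
    and sub: "(\<lambda>t. G t + w) ` UNIV \<subseteq> S"
  shows "interior (convex hull S) \<noteq> {}"
proof
  assume "interior (convex hull S) = {}"
  then obtain a b where a: "a \<noteq> 0" and h: "convex hull S \<subseteq> {x. a \<bullet> x = b}"
    using empty_interior_subset_hyperplane[OF convex_convex_hull] \<open>interior (convex hull S) = {}\<close> by blast
  have "\<forall>t. a \<bullet> (G t + w) = b" using sub h hull_subset[of S convex] by blast
  then show False using curve_not_in_line[OF C cr a] by blast
qed

lemma perp_line:
  fixes v d :: "real \<times> real"
  assumes "(- snd v, fst v) \<bullet> d = 0" "v \<noteq> 0"
  shows "d = ((v \<bullet> d) / (v \<bullet> v)) *\<^sub>R v"
proof -
  obtain v1 v2 d1 d2 where e: "v = (v1,v2)" "d = (d1,d2)" by (metis prod.collapse)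
  have h: "v1 * d2 = v2 * d1" using assms(1) e by (simp add: algebra_simps)
  have pos: "v1 * v1 + v2 * v2 \<noteq> 0" using assms(2) e
    by (auto simp: sum_squares_eq_zero_iff zero_prod_def)
  have "d1 * (v1 * v1 + v2 * v2) = d1 * v1 * v1 + v2 * (v2 * d1)" by (simp add: algebra_simps)
  also have "\<dots> = d1 * v1 * v1 + v2 * (v1 * d2)" using h by simp
  also have "\<dots> = (v1 * d1 + v2 * d2) * v1" by (simp add: algebra_simps)
  finally have 1: "d1 * (v1 * v1 + v2 * v2) = (v1 * d1 + v2 * d2) * v1" .
  have "d2 * (v1 * v1 + v2 * v2) = v1 * (v1 * d2) + d2 * v2 * v2" by (simp add: algebra_simps)
  also have "\<dots> = v1 * (v2 * d1) + d2 * v2 * v2" using h by simp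
  also have "\<dots> = (v1 * d1 + v2 * d2) * v2" by (simp add: algebra_simps)
  finally have 2: "d2 * (v1 * v1 + v2 * v2) = (v1 * d1 + v2 * d2) * v2" .
  have q1: "d1 = ((v1 * d1 + v2 * d2) / (v1 * v1 + v2 * v2)) * v1"
    using 1 pos by (simp add: divide_simps)
  have q2: "d2 = ((v1 * d1 + v2 * d2) / (v1 * v1 + v2 * v2)) * v2"
    using 2 pos by (simp add: divide_simps)
  show ?thesis unfolding e inner_Pair scaleR_Pair using q1 q2 by simp
qed

lemma line_side:
  fixes S :: "(real \<times> real) set"
  assumes cS: "convex S" and ne: "interior S \<noteq> {}" and v: "v \<noteq> 0"
    and av: "\<forall>t. x + t *\<^sub>R v \<notin> interior S"
  shows "\<exists>n. n \<noteq> 0 \<and> n \<bullet> v = 0 \<and> (\<forall>z\<in>S. n \<bullet> z \<ge> n \<bullet> x)"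
proof -
  define N where "N = (- snd v, fst v)"
  have N0: "N \<noteq> 0" using v by (auto simp: N_def prod_eq_iff)
  have Nv: "N \<bullet> v = 0" by (simp add: N_def inner_prod_def)
  have noton: "N \<bullet> z \<noteq> N \<bullet> x" if "z \<in> interior S" for z
  proof
    assume "N \<bullet> z = N \<bullet> x"
    then have "N \<bullet> (z - x) = 0" by (simp add: inner_diff_right)
    then have "z - x = ((v \<bullet> (z - x)) / (v \<bullet> v)) *\<^sub>R v" using perp_line[OF _ v] by (simp add: N_def)
    then have "z = x + ((v \<bullet> (z - x)) / (v \<bullet> v)) *\<^sub>R v" by (metis add.commute diff_add_cancel)
    moreover have "x + ((v \<bullet> (z - x)) / (v \<bullet> v)) *\<^sub>R v \<notin> interior S" using av by blast
    ultimately show False using that by simp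
  qed
  obtain p where p: "p \<in> interior S" using ne by blast
  define n where "n = (if N \<bullet> p > N \<bullet> x then N else - N)"
  have n0: "n \<noteq> 0" using N0 by (simp add: n_def)
  have nv: "n \<bullet> v = 0" using Nv by (simp add: n_def)
  have noton2: "n \<bullet> z \<noteq> n \<bullet> x" if "z \<in> interior S" for z
    using noton[OF that] by (auto simp: n_def)
  have np: "n \<bullet> p > n \<bullet> x" using noton[OF p] by (auto simp: n_def)
  have conn: "connected (interior S)" by (rule convex_connected[OF convex_interior[OF cS]])
  have intsub: "interior S \<subseteq> {z. n \<bullet> z \<ge> n \<bullet> x}"
  proof
    fix z assume z: "z \<in> interior S"
    show "z \<in> {z. n \<bullet> z \<ge> n \<bullet> x}"
    proof (rule ccontr)
      assume "z \<notin> {z. n \<bullet> z \<ge> n \<bullet> x}"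
      then have le: "n \<bullet> z \<le> n \<bullet> x" by simp
      have "\<exists>q\<in>interior S. n \<bullet> q = n \<bullet> x"
        by (rule connected_ivt_hyperplane[OF conn z p le]) (use np in linarith)
      then show False using noton2 by blast
    qed
  qed
  have "closure (interior S) \<subseteq> {z. n \<bullet> z \<ge> n \<bullet> x}"
    by (rule closure_minimal[OF intsub closed_halfspace_ge])
  then have "S \<subseteq> {z. n \<bullet> z \<ge> n \<bullet> x}"
    using convex_closure_interior[OF cS ne] closure_subset[of S] by blast
  then show ?thesis using n0 nv by blast
qed

lemma components_translate:
  fixes k :: "real \<times> real"
  assumes c: "c \<in> components S"
  shows "(\<lambda>z. k + z) ` c \<in> components ((\<lambda>z. k + z) ` S)"
proof -
  have cne: "c \<noteq> {}" and csub: "c \<subseteq> S" and ccon: "connected c"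
    using c by (rule in_components_nonempty, rule in_components_subset, rule in_components_connected)
  have cont: "continuous_on A (\<lambda>z. k' + z)" for A and k' :: "real \<times> real" by (intro continuous_intros)
  show ?thesis
    unfolding in_components_maximal
  proof (intro conjI allI impI)
    show "(\<lambda>z. k + z) ` c \<noteq> {}" using cne by simp
    show "(\<lambda>z. k + z) ` c \<subseteq> (\<lambda>z. k + z) ` S" using csub by blast
    show "connected ((\<lambda>z. k + z) ` c)" by (rule connected_continuous_image[OF cont ccon])
    fix D assume D: "D \<noteq> {} \<and> (\<lambda>z. k + z) ` c \<subseteq> D \<and> D \<subseteq> (\<lambda>z. k + z) ` S \<and> connected D"
    define D' where "D' = (\<lambda>z. -k + z) ` D"
    have "D' \<noteq> {}" using D by (simp add: D'_def)
    moreover have "c \<subseteq> D'" using D unfolding D'_def by force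
    moreover have "D' \<subseteq> S" using D unfolding D'_def by force
    moreover have "connected D'" unfolding D'_def using D connected_continuous_image[OF cont] by blast
    ultimately have "D' = c" using c unfolding in_components_maximal by blast
    then have "(\<lambda>z. k + z) ` D' = (\<lambda>z. k + z) ` c" by simp
    moreover have "(\<lambda>z. k + z) ` D' = D" unfolding D'_def image_image by simp
    ultimately show "D = (\<lambda>z. k + z) ` c" by simp
  qed
qed

lemma lift_set_translate:
  assumes k: "k \<in> Zsq"
  shows "(\<lambda>z. k + z) ` lift_set F = lift_set F"
proof
  show "(\<lambda>z. k + z) ` lift_set F \<subseteq> lift_set F"
  proof
    fix w assume "w \<in> (\<lambda>z. k + z) ` lift_set F"
    then obtain t k' where "w = k + (F t + k')" "k' \<in> Zsq" unfolding lift_set_def by blast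
    then have "w = F t + (k' + k)" "k' + k \<in> Zsq" using k Zsq_add by (auto simp: algebra_simps)
    then show "w \<in> lift_set F" unfolding lift_set_def by blast
  qed
  show "lift_set F \<subseteq> (\<lambda>z. k + z) ` lift_set F"
  proof
    fix w assume "w \<in> lift_set F"
    then obtain t k' where w: "w = F t + k'" "k' \<in> Zsq" unfolding lift_set_def by blast
    then have "F t + (k' - k) \<in> lift_set F" using k Zsq_diff unfolding lift_set_def by blast
    moreover have "w = k + (F t + (k' - k))" using w by (simp add: algebra_simps)
    ultimately show "w \<in> (\<lambda>z. k + z) ` lift_set F" by blast
  qed
qed

lemma hull_interior_translate:
  "(\<lambda>z. k + z) ` interior (convex hull c) = interior (convex hull ((\<lambda>z. (k::real\<times>real) + z) ` c))"
  by (simp add: convex_hull_translation interior_translation)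

definition Pdeep :: "nat set \<Rightarrow> (nat \<Rightarrow> real \<Rightarrow> real \<times> real) \<Rightarrow> (real \<times> real) \<times> (real \<times> real) \<Rightarrow> real \<Rightarrow> bool" where
  "Pdeep I f q r \<longleftrightarrow> (\<exists>t. \<exists>i\<in>I. \<exists>c\<in>components (lift_set (f i)).
      ball (fst q + t *\<^sub>R snd q) r \<subseteq> interior (convex hull c))"

lemma Pdeep_mono: "Pdeep I f q r \<Longrightarrow> r' \<le> r \<Longrightarrow> Pdeep I f q r'"
proof -
  assume P: "Pdeep I f q r" and le: "r' \<le> r"
  then obtain t i c where "i \<in> I" "c \<in> components (lift_set (f i))"
    "ball (fst q + t *\<^sub>R snd q) r \<subseteq> interior (convex hull c)" unfolding Pdeep_def by blast
  moreover have "ball (fst q + t *\<^sub>R snd q) r' \<subseteq> ball (fst q + t *\<^sub>R snd q) r"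
    by (rule subset_ball[OF le])
  ultimately show ?thesis unfolding Pdeep_def by blast
qed

lemma finite_cover_radius:
  assumes "finite \<F>" "\<F> \<subseteq> {N. open N \<and> (\<exists>r>0. \<forall>q\<in>N. Pdeep I f q r)}"
  shows "\<exists>r>0. \<forall>q\<in>\<Union>\<F>. Pdeep I f q r"
  using assms
proof (induction \<F> rule: finite_induct)
  case empty then show ?case by (intro exI[of _ 1]) auto
next
  case (insert N \<F>)
  then obtain r1 where r1: "r1 > 0" "\<forall>q\<in>\<Union>\<F>. Pdeep I f q r1" by auto
  obtain r2 where r2: "r2 > 0" "\<forall>q\<in>N. Pdeep I f q r2" using insert.prems by auto
  show ?case
  proof (intro exI[of _ "min r1 r2"] conjI ballI)
    show "min r1 r2 > 0" using r1 r2 by simp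
    fix q assume "q \<in> \<Union> (insert N \<F>)"
    then have "Pdeep I f q r1 \<or> Pdeep I f q r2" using r1 r2 by blast
    then show "Pdeep I f q (min r1 r2)" by (meson Pdeep_mono min.cobounded1 min.cobounded2)
  qed
qed

lemma uniform_depth:
  fixes I :: "nat set"
  assumes fin: "\<forall>x v. v \<noteq> 0 \<longrightarrow> (\<exists>t. \<exists>i\<in>I. x + t *\<^sub>R v \<in> scatterer_interior (f i))"
  shows "\<exists>\<delta>>0. \<forall>x v. v \<noteq> 0 \<longrightarrow> (\<exists>t. \<exists>i\<in>I. \<exists>c\<in>components (lift_set (f i)).
            ball (x + t *\<^sub>R v) \<delta> \<subseteq> interior (convex hull c))"
proof -
  define K :: "((real \<times> real) \<times> (real \<times> real)) set"
    where "K = ({0..1} \<times> {0..1}) \<times> sphere 0 1"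
  have cK: "compact K" unfolding K_def
    by (intro compact_Times compact_Icc compact_sphere)
  define \<T> where "\<T> = {N. open N \<and> (\<exists>r>0. \<forall>q\<in>N. Pdeep I f q r)}"
  have cover: "K \<subseteq> \<Union>\<T>"
  proof
    fix q assume q: "q \<in> K"
    then have "snd q \<noteq> 0" by (auto simp: K_def)
    then obtain t i where i: "i \<in> I" and y: "fst q + t *\<^sub>R snd q \<in> scatterer_interior (f i)"
      using fin by blast
    then obtain c where c: "c \<in> components (lift_set (f i))"
      and yc: "fst q + t *\<^sub>R snd q \<in> interior (convex hull c)"
      unfolding scatterer_interior_def by blast
    obtain r where r: "r > 0" "ball (fst q + t *\<^sub>R snd q) r \<subseteq> interior (convex hull c)"
      using yc open_contains_ball[THEN iffD1, OF open_interior] by blast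
    define N where "N = (\<lambda>q'. fst q' + t *\<^sub>R snd q') -` ball (fst q + t *\<^sub>R snd q) (r/2)"
    have oN: "open N" unfolding N_def
      by (rule open_vimage[OF open_ball]) (intro continuous_intros)
    have qN: "q \<in> N" using r by (simp add: N_def)
    have "\<forall>q'\<in>N. Pdeep I f q' (r/2)"
    proof
      fix q' assume "q' \<in> N"
      then have d: "dist (fst q + t *\<^sub>R snd q) (fst q' + t *\<^sub>R snd q') < r/2" by (simp add: N_def)
      have "ball (fst q' + t *\<^sub>R snd q') (r/2) \<subseteq> ball (fst q + t *\<^sub>R snd q) r"
      proof
        fix z assume "z \<in> ball (fst q' + t *\<^sub>R snd q') (r/2)"
        then have "dist (fst q' + t *\<^sub>R snd q') z < r/2" by simp
        then show "z \<in> ball (fst q + t *\<^sub>R snd q) r" using d dist_triangle[of "fst q + t *\<^sub>R snd q" z "fst q' + t *\<^sub>R snd q'"]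
          by simp
      qed
      then show "Pdeep I f q' (r/2)" unfolding Pdeep_def using i c r(2) by blast
    qed
    then have "N \<in> \<T>" using oN r(1) unfolding \<T>_def by (auto intro!: exI[of _ "r/2"])
    then show "q \<in> \<Union>\<T>" using qN by blast
  qed
  obtain \<F> where F: "\<F> \<subseteq> \<T>" "finite \<F>" "K \<subseteq> \<Union>\<F>"
    using compactE[OF cK cover] unfolding \<T>_def by blast
  obtain \<delta> where \<delta>: "\<delta> > 0" "\<forall>q\<in>\<Union>\<F>. Pdeep I f q \<delta>"
    using finite_cover_radius[OF F(2)] F(1) unfolding \<T>_def by blast
  have PK: "\<forall>q\<in>K. Pdeep I f q \<delta>" using \<delta> F(3) by blast
  show ?thesis
  proof (rule exI[of _ \<delta>], intro conjI allI impI)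
    show "\<delta> > 0" by fact
    fix x v :: "real \<times> real" assume v: "v \<noteq> 0"
    define k :: "real \<times> real" where "k = (of_int \<lfloor>fst x\<rfloor>, of_int \<lfloor>snd x\<rfloor>)"
    have kZ: "k \<in> Zsq" unfolding k_def Zsq_iff by simp
    define x0 where "x0 = x - k"
    define v0 where "v0 = v /\<^sub>R norm v"
    have fr: "t - of_int \<lfloor>t\<rfloor> \<in> {0..1::real}" for t
      using floor_correct[of t] by (auto simp del: of_int_floor_le) linarith
    have x01: "fst x0 \<in> {0..1} \<and> snd x0 \<in> {0..1}"
      using fr[of "fst x"] fr[of "snd x"] unfolding x0_def k_def by simp
    have v01: "norm v0 = 1" using v unfolding v0_def by simp
    have "(x0, v0) \<in> K" using x01 v01 unfolding K_def by (simp add: mem_Times_iff)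
    then obtain t i c where i: "i \<in> I" and c: "c \<in> components (lift_set (f i))"
      and b: "ball (x0 + t *\<^sub>R v0) \<delta> \<subseteq> interior (convex hull c)"
      using PK unfolding Pdeep_def by fastforce
    have eqp: "x + (t / norm v) *\<^sub>R v = k + (x0 + t *\<^sub>R v0)"
      by (simp add: x0_def v0_def algebra_simps divide_inverse)
    have c': "(\<lambda>z. k + z) ` c \<in> components (lift_set (f i))"
      using components_translate[OF c, of k] lift_set_translate[OF kZ] by simp
    have "ball (x + (t / norm v) *\<^sub>R v) \<delta> \<subseteq> interior (convex hull ((\<lambda>z. k + z) ` c))"
    proof
      fix z assume "z \<in> ball (x + (t / norm v) *\<^sub>R v) \<delta>"
      then have "z - k \<in> ball (x0 + t *\<^sub>R v0) \<delta>" unfolding eqp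
        by (simp add: dist_norm algebra_simps)
      then have "z - k \<in> interior (convex hull c)" using b by blast
      then have "k + (z - k) \<in> (\<lambda>z. k + z) ` interior (convex hull c)" by blast
      then show "z \<in> interior (convex hull ((\<lambda>z. k + z) ` c))"
        unfolding hull_interior_translate by simp
    qed
    then show "\<exists>t. \<exists>i\<in>I. \<exists>c\<in>components (lift_set (f i)).
            ball (x + t *\<^sub>R v) \<delta> \<subseteq> interior (convex hull c)"
      using i c' by blast
  qed
qed

theorem proposition4p2:
  fixes D :: nat and \<alpha> :: real
  assumes "D \<ge> 1" and "0 < \<alpha>" and "\<alpha> < 1"
  shows "\<forall>f\<in>BilFH D \<alpha>. \<exists>\<epsilon>>0. \<forall>g\<in>Bil D \<alpha>.
           (\<forall>i\<in>{1..D}. C3a_close \<alpha> \<epsilon> (f i) (g i)) \<longrightarrow> g \<in> BilFH D \<alpha>"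
proof
  fix f assume fFH: "f \<in> BilFH D \<alpha>"
  then have fB: "f \<in> Bil D \<alpha>" and ng: "\<not> has_grazing_only_trajectory D f"
    by (auto simp: BilFH_def)
  have fin: "\<forall>x v. v \<noteq> 0 \<longrightarrow> (\<exists>t. \<exists>i\<in>{1..D}. x + t *\<^sub>R v \<in> scatterer_interior (f i))"
    using ng unfolding has_grazing_only_trajectory_def by blast
  obtain \<delta> where \<delta>0: "\<delta> > 0" and deep: "\<forall>x v. v \<noteq> 0 \<longrightarrow> (\<exists>t. \<exists>i\<in>{1..D}. \<exists>c\<in>components (lift_set (f i)).
            ball (x + t *\<^sub>R v) \<delta> \<subseteq> interior (convex hull c))"
    using uniform_depth[OF fin] by blast
  show "\<exists>\<epsilon>>0. \<forall>g\<in>Bil D \<alpha>. (\<forall>i\<in>{1..D}. C3a_close \<alpha> \<epsilon> (f i) (g i)) \<longrightarrow> g \<in> BilFH D \<alpha>"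
  proof (rule exI[of _ "\<delta>/4"], intro conjI ballI impI)
    show "\<delta>/4 > 0" using \<delta>0 by simp
    fix g assume gB: "g \<in> Bil D \<alpha>" and close: "\<forall>i\<in>{1..D}. C3a_close \<alpha> (\<delta>/4) (f i) (g i)"
    have "\<not> has_grazing_only_trajectory D g"
    proof
      assume "has_grazing_only_trajectory D g"
      then obtain x v where v: "v \<noteq> 0"
        and av: "\<forall>t::real. \<forall>i\<in>{1..D}. x + t *\<^sub>R v \<notin> scatterer_interior (g i)"
        unfolding has_grazing_only_trajectory_def by blast
      obtain t0 i c where i: "i \<in> {1..D}" and c: "c \<in> components (lift_set (f i))"
        and b: "ball (x + t0 *\<^sub>R v) \<delta> \<subseteq> interior (convex hull c)"
        using deep v by blast
      have fcml: "circle_map_lift (f i)" and finj: "\<forall>s t. f i s - f i t \<in> Zsq \<longrightarrow> s - t \<in> \<int>"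
        using fB i unfolding Bil_def by blast+
      have gcml: "circle_map_lift (g i)" and gC: "C3a \<alpha> (g i)"
        and gcr: "\<forall>t. cross2 (vd 1 (g i) t) (vd 2 (g i) t) > 0"
        using gB i unfolding Bil_def by blast+
      obtain k0 where k0: "k0 \<in> Zsq" and ck: "c \<subseteq> {f i t + k0 | t. True}"
        using component_in_translate[OF fcml finj c] by blast
      obtain \<kappa> where \<kappa>: "\<kappa> \<in> Zsq" and near: "\<forall>t. norm (f i t - g i t - \<kappa>) \<le> \<delta>/4"
      proof -
        from close i obtain \<kappa> where "\<kappa> \<in> Zsq"
          "\<forall>j\<le>3. \<forall>t. norm (vd j (\<lambda>t. f i t - g i t - \<kappa>) t) \<le> \<delta>/4"
          unfolding C3a_close_def Let_def by blast
        then have "\<forall>t. norm (vd 0 (\<lambda>t. f i t - g i t - \<kappa>) t) \<le> \<delta>/4" by blast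
        then have "\<forall>t. norm (f i t - g i t - \<kappa>) \<le> \<delta>/4" by simp
        then show ?thesis using that \<open>\<kappa> \<in> Zsq\<close> by blast
      qed
      define w where "w = \<kappa> + k0"
      have wZ: "w \<in> Zsq" unfolding w_def by (rule Zsq_add[OF \<kappa> k0])
      define W where "W = (\<lambda>t. g i t + w) ` UNIV"
      have gcont: "continuous_on UNIV (g i)" using gcml by (simp add: circle_map_lift_def)
      have Wcon: "connected W" unfolding W_def
        by (rule connected_continuous_image[OF _ connected_UNIV]) (intro continuous_intros gcont)
      have Wsub: "W \<subseteq> lift_set (g i)" unfolding W_def lift_set_def using wZ by blast
      define c' where "c' = connected_component_set (lift_set (g i)) (g i 0 + w)"
      have c'comp: "c' \<in> components (lift_set (g i))"
        unfolding c'_def by (rule componentsI) (use Wsub W_def in blast)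
      have Wc': "W \<subseteq> c'" unfolding c'_def
        by (rule connected_component_maximal[OF _ Wcon Wsub]) (simp add: W_def)
      have ne: "interior (convex hull c') \<noteq> {}"
        by (rule hull_interior_nonempty[OF gC gcr]) (use Wc' W_def in blast)
      have avc: "\<forall>t. x + t *\<^sub>R v \<notin> interior (convex hull c')"
        using av i c'comp unfolding scatterer_interior_def by blast
      obtain n where n0: "n \<noteq> 0" and nv: "n \<bullet> v = 0"
        and side: "\<forall>z\<in>convex hull c'. n \<bullet> z \<ge> n \<bullet> x"
        using line_side[OF convex_convex_hull ne v avc] by blast
      have gside: "n \<bullet> (g i t + w) \<ge> n \<bullet> x" for t
      proof -
        have "g i t + w \<in> convex hull c'" using Wc' hull_subset[of c' convex] W_def by blast
        then show ?thesis using side by blast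
      qed
      define H where "H = {z. n \<bullet> z \<ge> n \<bullet> x - norm n * (\<delta>/4)}"
      have cH: "c \<subseteq> H"
      proof
        fix z assume "z \<in> c"
        then obtain t where z: "z = f i t + k0" using ck by blast
        have zz: "z = (g i t + w) + (f i t - g i t - \<kappa>)" unfolding z w_def by (simp add: algebra_simps)
        have "n \<bullet> z = n \<bullet> (g i t + w) + n \<bullet> (f i t - g i t - \<kappa>)" unfolding zz by (rule inner_add_right)
        moreover have "\<bar>n \<bullet> (f i t - g i t - \<kappa>)\<bar> \<le> norm n * norm (f i t - g i t - \<kappa>)"
          by (rule Cauchy_Schwarz_ineq2)
        moreover have "norm n * norm (f i t - g i t - \<kappa>) \<le> norm n * (\<delta>/4)"
          by (rule mult_left_mono[OF spec[OF near] norm_ge_zero])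
        ultimately show "z \<in> H" unfolding H_def using gside[of t] by auto
      qed
      have cvx: "convex H" unfolding H_def by (rule convex_halfspace_ge)
      have "convex hull c \<subseteq> H" using hull_minimal[of c H convex] cH cvx by blast
      then have bH: "ball (x + t0 *\<^sub>R v) \<delta> \<subseteq> H" using b interior_subset by blast
      define p where "p = (x + t0 *\<^sub>R v) - (\<delta>/2) *\<^sub>R (n /\<^sub>R norm n)"
      have nn: "norm n > 0" using n0 by simp
      have "dist (x + t0 *\<^sub>R v) p = \<delta>/2" using nn \<delta>0 by (simp add: p_def dist_norm)
      then have "p \<in> ball (x + t0 *\<^sub>R v) \<delta>" using \<delta>0 by simp
      then have pH: "n \<bullet> p \<ge> n \<bullet> x - norm n * (\<delta>/4)" using bH unfolding H_def by blast
      have nn2: "n \<bullet> n = norm n * norm n" by (simp add: dot_square_norm power2_eq_square)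
      have "n \<bullet> p = n \<bullet> x + t0 * (n \<bullet> v) - (\<delta>/2) * (inverse (norm n) * (n \<bullet> n))"
        unfolding p_def inner_diff_right inner_add_right inner_scaleR_right by (rule refl)
      also have "\<dots> = n \<bullet> x - (\<delta>/2) * norm n"
      proof -
        have "inverse (norm n) * (norm n * norm n) = norm n" using nn by (simp add: field_simps)
        then show ?thesis unfolding nn2 nv by simp
      qed
      finally have np: "n \<bullet> p = n \<bullet> x - (\<delta>/2) * norm n" .
      have e2: "(\<delta>/2) * norm n = 2 * (norm n * (\<delta>/4))" by simp
      have pos: "norm n * (\<delta>/4) > 0" using nn \<delta>0 by simp
      show False using pH np e2 pos by linarith
    qed
    then show "g \<in> BilFH D \<alpha>" using gB by (simp add: BilFH_def)
  qed
qed

end
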